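(* Let $\mathcal{G}$ be a hypergraph with rank $r(\mathcal{G})=r$. Then the strong chromatic number satisfies $\gamma(\mathcal{G})\le 1+(r-1)\lambda_{\max}(A_{\mathcal{G}})$, where $\lambda_{\max}(A_{\mathcal{G}})$ is the largest eigenvalue of $A_{\mathcal{G}}$.
   Context: A hypergraph $\mathcal{G}=(V,E)$ has a finite vertex set $V$ and a set $E$ of subsets of $V$ (edges), each of cardinality at least $2$. The rank $r(\mathcal{G})$ is the maximum cardinality of an edge. Two distinct vertices are adjacent if some edge contains both. The adjacency matrix $A_{\mathcal{G}}$ has $(A_{\mathcal{G}})_{ij}=\sum_{e\in E,\, i,j\in e}\frac{1}{|e|-1}$ for $i\ne j$ and zero diagonal. A strong vertex coloring assigns colors to vertices so that any two adjacent vertices get different colors; the strong chromatic number $\gamma(\mathcal{G})$ is the minimum number of colors in a strong vertex coloring. *)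

theory Defs
  imports "HOL-Analysis.Analysis"
begin

definition hypergraph :: "'n::finite set set \<Rightarrow> bool" where
  "hypergraph E \<longleftrightarrow> (\<forall>e\<in>E. card e \<ge> 2)"

definition hg_rank :: "'n::finite set set \<Rightarrow> nat" where
  "hg_rank E = (if E = {} then 0 else Max (card ` E))"

definition hg_adjacent :: "'n::finite set set \<Rightarrow> 'n \<Rightarrow> 'n \<Rightarrow> bool" where
  "hg_adjacent E i j \<longleftrightarrow> i \<noteq> j \<and> (\<exists>e\<in>E. i \<in> e \<and> j \<in> e)"

definition hg_adj_matrix :: "'n::finite set set \<Rightarrow> real^'n^'n" where
  "hg_adj_matrix E = (\<chi> i j. if i = j then 0
       else (\<Sum>e\<in>{e\<in>E. i \<in> e \<and> j \<in> e}. 1 / (real (card e) - 1)))"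

definition strong_coloring :: "'n::finite set set \<Rightarrow> ('n \<Rightarrow> nat) \<Rightarrow> nat \<Rightarrow> bool" where
  "strong_coloring E c k \<longleftrightarrow> (\<forall>v. c v < k) \<and> (\<forall>i j. hg_adjacent E i j \<longrightarrow> c i \<noteq> c j)"

definition strong_chromatic_number :: "'n::finite set set \<Rightarrow> nat" where
  "strong_chromatic_number E = (LEAST k. \<exists>c. strong_coloring E c k)"

definition is_eigenvalue :: "real^'n^'n \<Rightarrow> real \<Rightarrow> bool" where
  "is_eigenvalue A \<mu> \<longleftrightarrow> (\<exists>v. v \<noteq> 0 \<and> A *v v = \<mu> *\<^sub>R v)"

definition lambda_max :: "real^'n^'n \<Rightarrow> real" where
  "lambda_max A = Max {\<mu>. is_eigenvalue A \<mu>}"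

end

theory Submission
  imports Defs
begin

lemma sym_inner:
  fixes A :: "real^'n^'n"
  assumes "\<And>i j. A$i$j = A$j$i"
  shows "x \<bullet> (A *v y) = (A *v x) \<bullet> y"
proof -
  have "x \<bullet> (A *v y) = (\<Sum>i\<in>UNIV. \<Sum>j\<in>UNIV. x$i * A$i$j * y$j)"
    by (simp add: inner_vec_def matrix_vector_mult_def sum_distrib_left mult.assoc)
  also have "\<dots> = (\<Sum>j\<in>UNIV. \<Sum>i\<in>UNIV. x$i * A$i$j * y$j)" by (rule sum.swap)
  also have "\<dots> = (\<Sum>j\<in>UNIV. (\<Sum>i\<in>UNIV. A$j$i * x$i) * y$j)"
    by (intro sum.cong refl, simp add: sum_distrib_right sum_distrib_left mult_ac assms)
  also have "\<dots> = (A *v x) \<bullet> y"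
    by (simp add: inner_vec_def matrix_vector_mult_def)
  finally show ?thesis .
qed

lemma psd_zero:
  fixes a b :: real
  assumes "b \<ge> 0" "\<And>t. 2*t*a \<le> t^2 * b"
  shows "a = 0"
proof (rule ccontr)
  assume "a \<noteq> 0"
  define t where "t = a / (b+1)"
  have pos: "b+1 > 0" using assms(1) by simp
  have "2*t*a \<le> t^2*b" by (rule assms)
  hence "(2*t*a) * (b+1)^2 \<le> (t^2*b) * (b+1)^2" using pos by (simp add: mult_right_mono)
  also have tb: "t*(b+1) = a" using pos by (simp add: t_def)
  have "(t^2*b) * (b+1)^2 = (t*(b+1))*(t*(b+1))*b" by (simp add: power2_eq_square)
  also have "\<dots> = a*a*b" using tb by simp
  finally have 1: "(2*t*a) * (b+1)^2 \<le> a*a*b" .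
  have "(2*t*a) * (b+1)^2 = 2*(t*(b+1))*a*(b+1)" by (simp add: power2_eq_square)
  also have "\<dots> = 2*a*a*(b+1)" using tb by simp
  finally have "2*a*a*(b+1) \<le> a*a*b" using 1 by linarith
  moreover have "a*a > 0" using \<open>a\<noteq>0\<close> by (auto simp: zero_less_mult_iff)
  ultimately have c: "2*(a*a)*b + 2*(a*a) \<le> (a*a)*b" "a*a > 0" by (simp_all add: algebra_simps)
  have "(a*a)*b \<ge> 0" using c(2) assms(1) by simp
  then show False using c by linarith
qed

lemma aux:
  fixes M t c a qq b :: real
  shows "M + 2*t*(c + M*a) + t^2*qq \<le> M*(1+2*t*a+t^2*b) \<Longrightarrow> 2*t*c \<le> t^2*(M*b - qq)"
  by (simp add: algebra_simps)

lemma quad_expand: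
  fixes A :: "real^'n^'n"
  assumes sym: "\<And>i j. A$i$j = A$j$i"
  shows "(x + t *\<^sub>R y) \<bullet> (A *v (x + t *\<^sub>R y))
     = x \<bullet> (A *v x) + 2*t*(y \<bullet> (A *v x)) + t^2 * (y \<bullet> (A *v y))"
proof -
  have s: "x \<bullet> (A *v y) = y \<bullet> (A *v x)"
    using sym_inner[OF sym, of x y] by (simp add: inner_commute)
  have "(x + t *\<^sub>R y) \<bullet> (A *v (x + t *\<^sub>R y)) = x \<bullet> (A *v x) + t*(x \<bullet> (A *v y)) + (t*(y \<bullet> (A *v x)) + t*(t*(y \<bullet> (A *v y))))"
    by (simp only: matrix_vector_right_distrib matrix_vector_mult_scaleR inner_add_left inner_add_right inner_scaleR_left inner_scaleR_right) (simp add: algebra_simps)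
  then show ?thesis by (simp add: s power2_eq_square)
qed

lemma spectral_max:
  fixes A :: "real^'n^'n"
  assumes sym: "\<And>i j. A$i$j = A$j$i"
  shows "is_eigenvalue A (lambda_max A) \<and> (\<forall>x. x \<bullet> (A *v x) \<le> lambda_max A * (x \<bullet> x))"
proof -
  define q where "q x = x \<bullet> (A *v x)" for x
  have cont: "continuous_on (sphere 0 1) q" unfolding q_def by (intro continuous_intros)
  obtain x0 where x0: "x0 \<in> sphere (0::real^'n) 1" "\<forall>y\<in>sphere 0 1. q y \<le> q x0"
    using continuous_attains_sup[OF compact_sphere _ cont] by auto
  define M where "M = q x0"
  have x0n: "x0 \<bullet> x0 = 1" using x0(1) by (simp add: dot_square_norm)
  have bound: "q x \<le> M * (x \<bullet> x)" for x
  proof (cases "x = 0")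
    case True then show ?thesis by (simp add: q_def)
  next
    case False
    define y where "y = (1 / norm x) *\<^sub>R x"
    have "y \<in> sphere 0 1" using False by (simp add: y_def)
    hence "q y \<le> M" using x0(2) M_def by auto
    moreover have "q y = q x / (norm x)^2"
      by (simp only: q_def y_def matrix_vector_mult_scaleR inner_scaleR_left inner_scaleR_right power2_eq_square) simp
    moreover have "x \<bullet> x = (norm x)^2" by (simp add: dot_square_norm)
    moreover have "(norm x)^2 > 0" using False by simp
    ultimately show ?thesis by (simp add: divide_le_eq mult.commute)
  qed
  define w where "w = A *v x0 - M *\<^sub>R x0"
  have wz: "y \<bullet> w = 0" for y
  proof -
    have "2*t*(y \<bullet> w) \<le> t^2 * (M * (y \<bullet> y) - q y)" for t
    proof -
      have e: "y \<bullet> (A *v x0) = y \<bullet> w + M * (x0 \<bullet> y)" by (simp add: w_def inner_diff_right inner_commute)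
      have ex: "q (x0 + t *\<^sub>R y) = M + 2*t*(y \<bullet> (A *v x0)) + t^2 * q y"
        using quad_expand[OF sym, of x0 t y] by (simp add: q_def M_def)
      have nx: "(x0 + t *\<^sub>R y) \<bullet> (x0 + t *\<^sub>R y) = 1 + 2*t*(x0 \<bullet> y) + t^2 * (y \<bullet> y)"
        by (simp only: inner_add_left inner_add_right inner_scaleR_left inner_scaleR_right x0n inner_commute[of y x0]) (simp add: power2_eq_square algebra_simps)
      have "q (x0 + t *\<^sub>R y) \<le> M * ((x0 + t *\<^sub>R y) \<bullet> (x0 + t *\<^sub>R y))" by (rule bound)
      hence "M + 2*t*(y \<bullet> w + M * (x0 \<bullet> y)) + t^2 * q y \<le> M * (1 + 2*t*(x0 \<bullet> y) + t^2 * (y \<bullet> y))"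
        unfolding ex nx e .
      thus ?thesis by (rule aux)
    qed
    moreover have "M * (y \<bullet> y) - q y \<ge> 0" using bound[of y] by simp
    ultimately show ?thesis using psd_zero by blast
  qed
  have "w = 0" using wz[of w] by simp
  hence eigM: "A *v x0 = M *\<^sub>R x0" unfolding w_def by (rule right_minus_eq[THEN iffD1])
  have "x0 \<noteq> 0" using x0n by auto
  hence isM: "is_eigenvalue A M" using eigM unfolding is_eigenvalue_def by blast
  have le: "\<mu> \<le> M" if h: "is_eigenvalue A \<mu>" for \<mu>
  proof -
    obtain v where v: "v \<noteq> 0" "A *v v = \<mu> *\<^sub>R v" using h unfolding is_eigenvalue_def by blast
    have "\<mu> * (v \<bullet> v) \<le> M * (v \<bullet> v)" using bound[of v] v(2) unfolding q_def by simp
    moreover have "v \<bullet> v > 0" using v by simp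
    ultimately show ?thesis by (rule mult_right_le_imp_le)
  qed
  define S where "S = {\<mu>. is_eigenvalue A \<mu>}"
  define f where "f \<mu> = (SOME v. v \<noteq> 0 \<and> A *v v = \<mu> *\<^sub>R v)" for \<mu>
  have fS: "f \<mu> \<noteq> 0 \<and> A *v f \<mu> = \<mu> *\<^sub>R f \<mu>" if "\<mu> \<in> S" for \<mu>
    using that unfolding S_def is_eigenvalue_def f_def by (metis (mono_tags, lifting) someI_ex mem_Collect_eq)
  have orth: "f \<mu> \<bullet> f \<nu> = 0" if "\<mu> \<in> S" "\<nu> \<in> S" "\<mu> \<noteq> \<nu>" for \<mu> \<nu>
  proof -
    have "(A *v f \<mu>) \<bullet> f \<nu> = f \<mu> \<bullet> (A *v f \<nu>)" using sym_inner[OF sym] by simp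
    hence "\<mu> * (f \<mu> \<bullet> f \<nu>) = \<nu> * (f \<mu> \<bullet> f \<nu>)" using fS[OF that(1)] fS[OF that(2)] by simp
    thus ?thesis using that(3) by simp
  qed
  have inj: "inj_on f S"
  proof (rule inj_onI)
    fix \<mu> \<nu> assume h: "\<mu> \<in> S" "\<nu> \<in> S" "f \<mu> = f \<nu>"
    show "\<mu> = \<nu>"
    proof (rule ccontr)
      assume "\<mu> \<noteq> \<nu>"
      hence "f \<mu> \<bullet> f \<mu> = 0" using orth[OF h(1,2)] h(3) by simp
      thus False using fS[OF h(1)] by simp
    qed
  qed
  have "pairwise orthogonal (f ` S)"
    unfolding pairwise_def orthogonal_def using orth by auto
  moreover have "0 \<notin> f ` S" using fS by auto
  ultimately have "independent (f ` S)" by (rule pairwise_orthogonal_independent)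
  hence "finite (f ` S)" using independent_bound by blast
  hence finS: "finite S" using inj finite_imageD by blast
  have "lambda_max A = M" unfolding lambda_max_def
    using finS isM le by (intro Max_eqI) (auto simp: S_def)
  thus ?thesis using isM bound by (simp add: q_def)
qed


lemma greedy:
  fixes adj :: "'a \<Rightarrow> 'a \<Rightarrow> bool" and D :: nat
  assumes "finite S" and sym: "\<And>i j. adj i j \<Longrightarrow> adj j i" and irr: "\<And>i. \<not> adj i i"
    and "\<And>T. T \<subseteq> S \<Longrightarrow> T \<noteq> {} \<Longrightarrow> \<exists>v\<in>T. card {u\<in>T. adj v u} \<le> D"
  shows "\<exists>c. (\<forall>v. c v < Suc D) \<and> (\<forall>i\<in>S. \<forall>j\<in>S. adj i j \<longrightarrow> c i \<noteq> c j)"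
  using assms(1,4)
proof (induction S rule: finite_psubset_induct)
  case (psubset S)
  show ?case
  proof (cases "S = {}")
    case True thus ?thesis by (intro exI[of _ "\<lambda>_. 0"]) auto
  next
    case False
    obtain v where v: "v \<in> S" "card {u\<in>S. adj v u} \<le> D"
      using psubset.prems[of S] False by auto
    have sub: "S - {v} \<subset> S" using v by auto
    have "\<exists>c. (\<forall>v. c v < Suc D) \<and> (\<forall>i\<in>S - {v}. \<forall>j\<in>S - {v}. adj i j \<longrightarrow> c i \<noteq> c j)"
      apply (rule psubset.IH[OF sub])
      using psubset.prems sub by (meson Diff_subset subset_trans)
    then obtain c where c: "\<forall>v. c v < Suc D" "\<forall>i\<in>S - {v}. \<forall>j\<in>S - {v}. adj i j \<longrightarrow> c i \<noteq> c j"
      by blast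
    define U where "U = c ` {u\<in>S. adj v u}"
    have finU: "finite U" using psubset.hyps unfolding U_def by simp
    have "card U \<le> D" unfolding U_def
      by (rule le_trans[OF card_image_le v(2)]) (use psubset.hyps in simp)
    have "\<not> {..<Suc D} \<subseteq> U"
    proof
      assume "{..<Suc D} \<subseteq> U"
      hence "card {..<Suc D} \<le> card U" by (rule card_mono[OF finU])
      thus False using \<open>card U \<le> D\<close> by simp
    qed
    then obtain k where k: "k < Suc D" "k \<notin> U" by auto
    show ?thesis
    proof (intro exI[of _ "c(v := k)"] conjI ballI impI allI)
      fix w show "(c(v := k)) w < Suc D" using c(1) k(1) by simp
    next
      fix i j assume ij: "i \<in> S" "j \<in> S" "adj i j"
      show "(c(v := k)) i \<noteq> (c(v := k)) j"
      proof (cases "i = v")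
        case True
        hence "j \<noteq> v" using ij(3) irr by auto
        moreover have "c j \<in> U" unfolding U_def using ij True by auto
        ultimately show ?thesis using True k(2) by auto
      next
        case iv: False
        show ?thesis
        proof (cases "j = v")
          case True
          have "c i \<in> U" unfolding U_def using ij True sym[OF ij(3)] by auto
          thus ?thesis using True iv k(2) by auto
        next
          case False
          thus ?thesis using iv ij c(2) by auto
        qed
      qed
    qed
  qed
qed


lemma sum_indicator_UNIV:
  fixes f :: "'n::finite \<Rightarrow> real"
  shows "(\<Sum>i\<in>UNIV. (if i \<in> T then f i else 0)) = sum f T"
  by (simp add: sum.If_cases Int_def)

lemma adj_entry_nonneg:
  fixes E :: "'n::finite set set"
  assumes "hypergraph E"
  shows "hg_adj_matrix E $ i $ j \<ge> 0"
proof -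
  have "0 \<le> 1 / (real (card e) - 1)" if "e \<in> E" for e
    using assms that unfolding hypergraph_def by force
  thus ?thesis unfolding hg_adj_matrix_def by (auto intro!: sum_nonneg)
qed

lemma adj_entry_ge:
  fixes E :: "'n::finite set set"
  assumes "hypergraph E" "hg_adjacent E i j"
  shows "hg_adj_matrix E $ i $ j \<ge> 1 / (real (hg_rank E) - 1)"
proof -
  obtain e where e: "e \<in> E" "i \<in> e" "j \<in> e" and ij: "i \<noteq> j"
    using assms(2) unfolding hg_adjacent_def by blast
  have c2: "card e \<ge> 2" using assms(1) e(1) unfolding hypergraph_def by blast
  have "E \<noteq> {}" using e by auto
  hence cr: "card e \<le> hg_rank E" unfolding hg_rank_def using e(1) by simp
  have nn: "0 \<le> 1 / (real (card e') - 1)" if "e' \<in> E" for e'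
    using assms(1) that unfolding hypergraph_def by force
  have "1 / (real (hg_rank E) - 1) \<le> 1 / (real (card e) - 1)"
    using c2 cr by (intro divide_left_mono) auto
  also have "\<dots> \<le> (\<Sum>e\<in>{e\<in>E. i \<in> e \<and> j \<in> e}. 1 / (real (card e) - 1))"
    by (rule member_le_sum) (use e nn in auto)
  also have "\<dots> = hg_adj_matrix E $ i $ j" unfolding hg_adj_matrix_def using ij by simp
  finally show ?thesis .
qed

theorem theorem3:
  fixes E :: "'n::finite set set"
  assumes "hypergraph E"
  shows "real (strong_chromatic_number E)
           \<le> 1 + (real (hg_rank E) - 1) * lambda_max (hg_adj_matrix E)"
proof -
  define A where "A = hg_adj_matrix E"
  define lam where "lam = lambda_max A"
  have sym: "A$i$j = A$j$i" for i j
    unfolding A_def hg_adj_matrix_def by (simp add: conj_commute eq_commute)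
  have sp: "is_eigenvalue A lam" "\<And>x. x \<bullet> (A *v x) \<le> lam * (x \<bullet> x)"
    using spectral_max[of A] sym unfolding lam_def by auto
  have diag: "A$k$k = 0" for k unfolding A_def hg_adj_matrix_def by simp
  have lam0: "lam \<ge> 0"
  proof -
    fix k :: 'n
    have "axis k (1::real) \<bullet> (A *v axis k 1) = A$k$k"
      by (simp add: matrix_vector_mult_basis inner_axis' column_def)
    moreover have "axis k (1::real) \<bullet> axis k 1 = 1" by (simp add: inner_axis_axis)
    ultimately show ?thesis using sp(2)[of "axis k 1"] diag by simp
  qed
  show ?thesis
  proof (cases "E = {}")
    case True
    have "strong_coloring E (\<lambda>_. 0) 1"
      unfolding strong_coloring_def hg_adjacent_def using True by simp
    hence g: "strong_chromatic_number E \<le> 1"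
      unfolding strong_chromatic_number_def by (intro Least_le) blast
    have A0: "A = 0" unfolding A_def hg_adj_matrix_def using True by (simp add: vec_eq_iff)
    obtain v where "v \<noteq> 0" "A *v v = lam *\<^sub>R v" using sp(1) unfolding is_eigenvalue_def by blast
    hence "lam = 0" using A0 by simp
    hence "lambda_max (hg_adj_matrix E) = 0" unfolding lam_def A_def .
    thus ?thesis using g True by (simp add: hg_rank_def)
  next
    case False
    define r1 where "r1 = real (hg_rank E) - 1"
    obtain e0 where e0: "e0 \<in> E" using False by blast
    have "card e0 \<ge> 2" using assms e0 unfolding hypergraph_def by blast
    moreover have "card e0 \<le> hg_rank E" unfolding hg_rank_def using e0 False by simp
    ultimately have r1pos: "r1 \<ge> 1" unfolding r1_def by simp
    have deg: "\<exists>v\<in>T. real (card {u\<in>T. hg_adjacent E v u}) \<le> r1 * lam"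
      if T: "T \<noteq> {}" for T :: "'n set"
    proof (rule ccontr)
      assume "\<not> ?thesis"
      hence gt: "\<forall>v\<in>T. real (card {u\<in>T. hg_adjacent E v u}) > r1 * lam" by auto
      define x :: "real^'n" where "x = (\<chi> i. if i \<in> T then 1 else 0)"
      have xx: "x \<bullet> x = real (card T)"
        unfolding x_def inner_vec_def by (simp add: if_distrib sum_indicator_UNIV cong: if_cong)
      have qx: "x \<bullet> (A *v x) = (\<Sum>i\<in>T. \<Sum>j\<in>T. A$i$j)"
      proof -
        have "x \<bullet> (A *v x) = (\<Sum>i\<in>UNIV. (if i \<in> T then (\<Sum>j\<in>UNIV. (if j \<in> T then A$i$j else 0)) else 0))"
          unfolding x_def inner_vec_def matrix_vector_mult_def
          by (intro sum.cong refl) (simp add: if_distrib cong: if_cong)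
        thus ?thesis by (simp add: sum_indicator_UNIV)
      qed
      have rowbound: "real (card {u\<in>T. hg_adjacent E i u}) \<le> r1 * (\<Sum>j\<in>T. A$i$j)" for i
      proof -
        have "real (card {u\<in>T. hg_adjacent E i u}) = r1 * (\<Sum>j\<in>{u\<in>T. hg_adjacent E i u}. 1 / r1)"
          using r1pos by simp
        also have "\<dots> \<le> r1 * (\<Sum>j\<in>{u\<in>T. hg_adjacent E i u}. A$i$j)"
          using r1pos adj_entry_ge[OF assms] unfolding A_def r1_def
          by (intro mult_left_mono sum_mono) auto
        also have "\<dots> \<le> r1 * (\<Sum>j\<in>T. A$i$j)"
          using r1pos adj_entry_nonneg[OF assms] unfolding A_def
          by (intro mult_left_mono sum_mono2) auto
        finally show ?thesis .
      qed
      have "(\<Sum>v\<in>T. r1 * lam) < (\<Sum>v\<in>T. real (card {u\<in>T. hg_adjacent E v u}))"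
        using gt T by (intro sum_strict_mono) auto
      also have "\<dots> \<le> (\<Sum>i\<in>T. r1 * (\<Sum>j\<in>T. A$i$j))"
        by (intro sum_mono rowbound)
      also have "\<dots> = r1 * (x \<bullet> (A *v x))" by (simp add: qx sum_distrib_left)
      also have "\<dots> \<le> r1 * (lam * real (card T))"
        using sp(2)[of x] xx r1pos by (intro mult_left_mono) auto
      finally show False by (simp add: mult_ac)
    qed
    define D where "D = nat \<lfloor>r1 * lam\<rfloor>"
    have degD: "\<exists>v\<in>T. card {u\<in>T. hg_adjacent E v u} \<le> D" if hT: "T \<subseteq> UNIV" "T \<noteq> {}" for T :: "'n set"
    proof -
      obtain v where v: "v \<in> T" "real (card {u\<in>T. hg_adjacent E v u}) \<le> r1 * lam"
        using deg[OF hT(2)] by blast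
      have "int (card {u\<in>T. hg_adjacent E v u}) \<le> \<lfloor>r1 * lam\<rfloor>"
        using v(2) by (simp add: le_floor_iff)
      hence "card {u\<in>T. hg_adjacent E v u} \<le> D" unfolding D_def by linarith
      thus ?thesis using v(1) by blast
    qed
    obtain c where c: "\<forall>v. c v < Suc D" "\<forall>i\<in>UNIV. \<forall>j\<in>UNIV. hg_adjacent E i j \<longrightarrow> c i \<noteq> c j"
    proof -
      have s1: "hg_adjacent E j i" if "hg_adjacent E i j" for i j
        using that unfolding hg_adjacent_def by blast
      have s2: "\<not> hg_adjacent E i i" for i unfolding hg_adjacent_def by simp
      show ?thesis using greedy[of UNIV "hg_adjacent E" D, OF finite[of UNIV] s1 s2 degD] that by blast
    qed
    have "strong_coloring E c (Suc D)" unfolding strong_coloring_def using c by blast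
    hence "strong_chromatic_number E \<le> Suc D"
      unfolding strong_chromatic_number_def by (intro Least_le) blast
    hence "real (strong_chromatic_number E) \<le> 1 + real D" by simp
    also have "real D \<le> r1 * lam" unfolding D_def using r1pos lam0 by simp
    finally show ?thesis unfolding r1_def lam_def A_def by simp
  qed
qed

end
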